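(* Let $T$ be Takagi's function on $[0,1]$, $T(x)=\sum_{n=1}^\infty 2^{-n}\phi^{(n)}(x)$, with $\phi(x)=2x$ on $[0,1/2]$, $\phi(x)=2-2x$ on $[1/2,1]$. Let $x\in[0,1)$ with binary expansion $x=\sum_{k\ge1}2^{-k}\varepsilon_k$ (for dyadic $x$, the expansion eventually all zeros), and suppose $d_1(x):=\lim_{n\to\infty}\frac1n\sum_{k=1}^n\varepsilon_k$ exists; set $d_0(x)=1-d_1(x)$. Let $b_1<b_2<\cdots$ enumerate the indices $k$ with $\varepsilon_k=0$. (i) If $d_1(x)<1$, then $\displaystyle\lim_{h\downarrow0}\frac{T(x+h)-T(x)}{h\log_2(1/|h|)}=d_0(x)-d_1(x)$. (ii) If $d_1(x)=1$, then $\displaystyle\lim_{h\downarrow0}\frac{T(x+h)-T(x)}{h\log_2(1/|h|)}$ exists if and only if $b_{n+1}/b_n\to1$, in which case the limit equals $-1$.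
   Context: For non-dyadic $x$, $\{b_n\}$ coincides with the sequence determined by $1-x=\sum_{n\ge1}2^{-b_n}$. *)

theory Defs
  imports "HOL-Analysis.Analysis" "HOL-Library.Infinite_Set"
begin

definition tent :: "real \<Rightarrow> real" where
  "tent x = (if x \<le> 1/2 then 2 * x else 2 - 2 * x)"

definition takagi :: "real \<Rightarrow> real" where
  "takagi x = (\<Sum>n. (1/2) ^ (Suc n) * (tent ^^ (Suc n)) x)"

text \<open>k-th binary digit of x (k >= 1); for dyadic x this is the expansion ending in zeros.\<close>
definition bdigit :: "real \<Rightarrow> nat \<Rightarrow> nat" where
  "bdigit x k = nat (\<lfloor>2 ^ k * x\<rfloor> mod 2)"

text \<open>Set of indices k >= 1 with binary digit 0; b_{n+1} = enumerate (zero_digits x) n.\<close>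
definition zero_digits :: "real \<Rightarrow> nat set" where
  "zero_digits x = {k. 1 \<le> k \<and> bdigit x k = 0}"

end

theory Submission
  imports Defs
begin

definition psi :: "real \<Rightarrow> real" where
  "psi z = (if frac z \<le> 1/2 then frac z else 1 - frac z)"

lemma floor2: "\<lfloor>2*z\<rfloor> = 2*\<lfloor>z\<rfloor> + (if frac z \<ge> 1/2 then 1 else 0)"
proof -
  have "2*z = of_int (2*\<lfloor>z\<rfloor>) + 2 * frac z" by (simp add: frac_def)
  hence "\<lfloor>2*z\<rfloor> = 2*\<lfloor>z\<rfloor> + \<lfloor>2*frac z\<rfloor>" by (metis floor_add_int add.commute)
  moreover have "\<lfloor>2*frac z\<rfloor> = (if frac z \<ge> 1/2 then 1 else 0)"
    using frac_lt_1[of z] frac_ge_0[of z] by (auto simp: floor_eq_iff)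
  ultimately show ?thesis by simp
qed

lemma frac2: "frac (2*z) = 2 * frac z - (if frac z \<ge> 1/2 then 1 else 0)"
  using floor2[of z] by (simp add: frac_def)

lemma bdigit_Suc: "bdigit x (Suc k) = (if frac (2^k*x) \<ge> 1/2 then 1 else 0)"
proof -
  have e: "(2::real)^Suc k * x = 2 * (2^k*x)" by simp
  show ?thesis unfolding bdigit_def e floor2[of "2^k*x"] by auto
qed

lemma frac_Suc: "frac (2^Suc k * x) = 2 * frac (2^k*x) - real (bdigit x (Suc k))"
proof -
  have e: "(2::real)^Suc k * x = 2 * (2^k*x)" by simp
  show ?thesis unfolding e frac2[of "2^k*x"] bdigit_Suc[of x k] by auto
qed

lemma bdigit_le1: "bdigit x k \<le> 1"
  unfolding bdigit_def by auto

lemma run_ones: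
  "frac (2^K*x) \<ge> 1 - 1/2^j \<Longrightarrow> K < i \<Longrightarrow> i \<le> K + j \<Longrightarrow> bdigit x i = 1"
proof (induction j arbitrary: K)
  case 0 then show ?case by simp
next
  case (Suc j)
  have h: "frac (2^K*x) \<ge> 1/2"
  proof -
    have "(1::real)/2^Suc j \<le> 1/2" by (simp add: power_le_one_iff)
    thus ?thesis using Suc.prems(1) by linarith
  qed
  hence d: "bdigit x (Suc K) = 1" using bdigit_Suc by simp
  show ?case
  proof (cases "i = Suc K")
    case True then show ?thesis using d by simp
  next
    case False
    have e: "(1::real)/2^Suc j = (1/2^j)/2" by simp
    have "frac (2^Suc K*x) \<ge> 1 - 1/2^j"
      using frac_Suc[of K x] d Suc.prems(1) unfolding e by simp
    thus ?thesis using Suc.IH[of "Suc K"] Suc.prems False by simp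
  qed
qed

lemma run_ones_conv:
  "(\<And>i. K < i \<Longrightarrow> i \<le> K + j \<Longrightarrow> bdigit x i = 1) \<Longrightarrow> frac (2^K*x) \<ge> 1 - 1/2^j"
proof (induction j arbitrary: K)
  case 0 then show ?case using frac_ge_0 by simp
next
  case (Suc j)
  have d: "bdigit x (Suc K) = 1" using Suc.prems by simp
  have "frac (2^Suc K*x) \<ge> 1 - 1/2^j" using Suc.IH[of "Suc K"] Suc.prems by simp
  moreover have e: "(1::real)/2^Suc j = (1/2^j)/2" by simp
  ultimately show ?case using frac_Suc[of K x] d unfolding e by simp
qed

lemma infinite_zero_digits: "infinite (zero_digits x)"
proof
  assume f: "finite (zero_digits x)"
  obtain N where N: "\<forall>k\<in>zero_digits x. k < N"
    using f finite_nat_bounded by (metis lessThan_iff subset_eq)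
  have "\<And>i. N < i \<Longrightarrow> bdigit x i = 1"
  proof -
    fix i assume "N < i"
    hence "i \<notin> zero_digits x" using N by auto
    hence "bdigit x i \<noteq> 0" using \<open>N < i\<close> by (auto simp: zero_digits_def)
    thus "bdigit x i = 1" using bdigit_le1[of x i] by simp
  qed
  hence R: "\<And>j. frac (2^N*x) \<ge> 1 - 1/2^j" by (rule run_ones_conv) auto
  obtain j where "(1/2::real)^j < 1 - frac (2^N*x)"
    using frac_lt_1[of "2^N*x"] real_arch_pow_inv[of "1 - frac (2^N*x)" "1/2"] by auto
  hence "1/2^j < 1 - frac (2^N*x)" by (simp add: power_one_over)
  with R[of j] show False by linarith
qed

lemma psi_nonneg: "psi z \<ge> 0" and psi_le: "psi z \<le> 1/2"
  unfolding psi_def using frac_ge_0[of z] frac_lt_1[of z] by auto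

lemma psi_le_dist: "psi z \<le> \<bar>z - of_int n\<bar>"
proof -
  have z: "z = of_int \<lfloor>z\<rfloor> + frac z" by (simp add: frac_def)
  show ?thesis
  proof (cases "n \<le> \<lfloor>z\<rfloor>")
    case True
    hence "of_int n \<le> (of_int \<lfloor>z\<rfloor>::real)" by simp
    thus ?thesis using frac_ge_0[of z] unfolding psi_def by (subst z, auto)
  next
    case False
    hence "of_int n \<ge> (of_int \<lfloor>z\<rfloor>::real) + 1" by linarith
    thus ?thesis using frac_lt_1[of z] unfolding psi_def by (subst z, auto)
  qed
qed

lemma psi_eq_dist: "\<exists>n. psi z = \<bar>z - of_int n\<bar>"
proof -
  have z: "z = of_int \<lfloor>z\<rfloor> + frac z" by (simp add: frac_def)
  show ?thesis
  proof (cases "frac z \<le> 1/2")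
    case True
    hence "psi z = \<bar>z - of_int \<lfloor>z\<rfloor>\<bar>" unfolding psi_def using frac_ge_0[of z] by (subst (2) z, simp)
    thus ?thesis by blast
  next
    case False
    hence "psi z = \<bar>z - of_int (\<lfloor>z\<rfloor>+1)\<bar>" unfolding psi_def using frac_lt_1[of z] by (subst (2) z, simp)
    thus ?thesis by blast
  qed
qed

lemma psi_lipschitz: "\<bar>psi a - psi b\<bar> \<le> \<bar>a - b\<bar>"
proof -
  obtain na where na: "psi a = \<bar>a - of_int na\<bar>" using psi_eq_dist by blast
  obtain nb where nb: "psi b = \<bar>b - of_int nb\<bar>" using psi_eq_dist by blast
  have "psi a \<le> \<bar>a - of_int nb\<bar>" by (rule psi_le_dist)
  moreover have "psi b \<le> \<bar>b - of_int na\<bar>" by (rule psi_le_dist)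
  ultimately show ?thesis using na nb by linarith
qed

lemma psi_int_shift: "psi (z + of_int n) = psi z"
  unfolding psi_def by simp

lemma psi_int: "psi (of_int n) = 0"
  unfolding psi_def by simp

lemma psi_linear:
  assumes "\<lfloor>2*a\<rfloor> = \<lfloor>2*b\<rfloor>"
  shows "psi b - psi a = (if frac a \<ge> 1/2 then -1 else 1) * (b - a)"
proof -
  let ?da = "(if frac a \<ge> 1/2 then 1 else 0)::int"
  let ?db = "(if frac b \<ge> 1/2 then 1 else 0)::int"
  have "2*\<lfloor>a\<rfloor> + ?da = 2*\<lfloor>b\<rfloor> + ?db" using assms floor2[of a] floor2[of b] by simp
  hence fl: "\<lfloor>a\<rfloor> = \<lfloor>b\<rfloor>" and dd: "?da = ?db" by (auto split: if_splits) presburger+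
  have fr: "frac b - frac a = b - a" using fl by (simp add: frac_def)
  show ?thesis
  proof (cases "frac a \<ge> 1/2")
    case True
    hence "frac b \<ge> 1/2" using dd by (auto split: if_splits)
    then show ?thesis using True fr unfolding psi_def by auto
  next
    case False
    hence "\<not> frac b \<ge> 1/2" using dd by (auto split: if_splits)
    then show ?thesis using False fr unfolding psi_def by auto
  qed
qed

definition S :: "real \<Rightarrow> real" where
  "S z = (\<Sum>n. psi (2^n*z) / 2^n)"

lemma summable_S: "summable (\<lambda>n. psi (2^n*z) / 2^n)"
proof (rule summable_comparison_test'[of "\<lambda>n. (1/2::real)^n" 0])
  show "summable (\<lambda>n. (1/2::real)^n)" by simp
  fix n :: nat
  have "psi (2^n*z) \<le> 1" using psi_le[of "2^n*z"] by simp
  hence "psi (2^n*z) / 2^n \<le> 1/2^n" by (simp add: divide_right_mono)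
  thus "norm (psi (2^n*z) / 2^n) \<le> (1/2)^n" using psi_nonneg[of "2^n*z"] by (simp add: power_one_over)
qed

lemma S_split: "S z = (\<Sum>n<m. psi (2^n*z) / 2^n) + S (2^m*z) / 2^m"
proof -
  have "S z = (\<Sum>n. psi (2^(n+m)*z) / 2^(n+m)) + (\<Sum>n<m. psi (2^n*z) / 2^n)"
    unfolding S_def by (rule suminf_split_initial_segment[OF summable_S])
  moreover have "(\<Sum>n. psi (2^(n+m)*z) / 2^(n+m)) = (\<Sum>n. psi (2^n*(2^m*z)) / 2^n) / 2^m"
  proof -
    have "(\<lambda>n. psi (2^(n+m)*z) / 2^(n+m)) = (\<lambda>n. psi (2^n*(2^m*z)) / 2^n / 2^m)"
      by (simp add: power_add mult.assoc)
    thus ?thesis using suminf_divide[OF summable_S[of "2^m*z"], of "2^m"] by simp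
  qed
  ultimately show ?thesis unfolding S_def by simp
qed

lemma S_nonneg: "S z \<ge> 0"
  unfolding S_def by (rule suminf_nonneg[OF summable_S]) (simp add: psi_nonneg)

lemma S_le1: "S z \<le> 1"
proof -
  have "S z \<le> (\<Sum>n. (1/2::real)^n / 2)"
    unfolding S_def
  proof (rule suminf_le[OF _ summable_S])
    fix n :: nat
    show "psi (2^n*z) / 2^n \<le> (1/2)^n / 2"
    proof -
      have "psi (2^n*z) / 2^n \<le> (1/2) / 2^n" using psi_le[of "2^n*z"] by (rule divide_right_mono) simp
      thus ?thesis by (simp add: power_one_over)
    qed
  qed (simp add: summable_divide)
  also have "\<dots> = 1" using suminf_divide[of "\<lambda>n. (1/2::real)^n" 2] suminf_geometric[of "1/2::real"] by simp
  finally show ?thesis .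
qed

lemma S_int_shift: "S (z + of_int k) = S z"
proof -
  have "\<And>n. psi (2^n*(z + of_int k)) = psi (2^n*z)"
  proof -
    fix n :: nat
    have "psi (2^n*(z + of_int k)) = psi (2^n*z + of_int (2^n*k))"
      by (rule arg_cong[where f=psi]) (simp add: algebra_simps)
    thus "psi (2^n*(z + of_int k)) = psi (2^n*z)" by (simp only: psi_int_shift)
  qed
  thus ?thesis unfolding S_def by simp
qed

lemma S_int: "S (of_int k) = 0"
proof -
  have "\<And>n. psi (2^n*(of_int k)) = 0"
  proof -
    fix n :: nat
    have "(2::real)^n*(of_int k) = of_int (2^n*k)" by simp
    thus "psi (2^n*(of_int k)) = 0" using psi_int by metis
  qed
  thus ?thesis unfolding S_def by simp
qed

lemma S_pow: "S (1/2^t) = real t / 2^t"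
proof -
  have "S (1/2^t) = (\<Sum>n<t. psi (2^n*(1/2^t)) / 2^n) + S (2^t*(1/2^t)) / 2^t" by (rule S_split)
  also have "S (2^t*(1/2^t)) = 0" using S_int[of 1] by simp
  also have "(\<Sum>n<t. psi (2^n*(1/2^t)) / 2^n) = (\<Sum>n<t. 1/2^t)"
  proof (rule sum.cong)
    fix n assume "n \<in> {..<t}"
    hence nt: "n < t" by simp
    have e: "(2::real)^n*(1/2^t) = 1/2^(t-n)" using nt by (simp add: power_diff)
    have "(2::real)^1 \<le> 2^(t-n)" by (rule power_increasing) (use nt in auto)
    hence "(1::real)/2^(t-n) \<le> 1/2" by (simp add: divide_le_cancel)
    moreover have "frac ((1::real)/2^(t-n)) = 1/2^(t-n)"
      using \<open>(1::real)/2^(t-n) \<le> 1/2\<close> by (simp add: frac_eq)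
    ultimately have "psi (2^n*(1/2^t)) = 1/2^(t-n)" unfolding e psi_def by simp
    thus "psi (2^n*(1/2^t)) / 2^n = 1/2^t" using nt by (simp add: power_diff)
  qed simp
  finally show ?thesis by simp
qed

lemma tent_step: "tent (2 * psi z) = 2 * psi (2*z)"
  using frac_ge_0[of z] frac_lt_1[of z]
  unfolding tent_def psi_def frac2[of z] by auto

lemma tent_iter: "0 \<le> x \<Longrightarrow> x \<le> 1 \<Longrightarrow> (tent ^^ Suc n) x = 2 * psi (2^n*x)"
proof (induction n)
  case 0
  have "frac (x/2) = x/2" using 0 by (simp add: frac_eq)
  hence "psi (x/2) = x/2" using 0 unfolding psi_def by simp
  hence e2: "2 * psi (x/2) = x" by simp
  have "tent (2 * psi (x/2)) = 2 * psi (2*(x/2))" by (rule tent_step)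
  hence "tent x = 2 * psi x" unfolding e2 by simp
  thus ?case by simp
next
  case (Suc n)
  have "(tent ^^ Suc (Suc n)) x = tent (2 * psi (2^n*x))" using Suc by simp
  also have "\<dots> = 2 * psi (2^Suc n*x)" by (simp add: tent_step mult.assoc)
  finally show ?case .
qed

lemma takagi_S: "0 \<le> x \<Longrightarrow> x \<le> 1 \<Longrightarrow> takagi x = S x"
  unfolding takagi_def S_def using tent_iter
  by (simp add: power_one_over)

definition Dsum :: "real \<Rightarrow> nat \<Rightarrow> real" where
  "Dsum a m = (\<Sum>n<m. 1 - 2 * real (bdigit a (Suc n)))"

lemma term_bound:
  "\<bar>(psi (2^n*y) - psi (2^n*a)) / 2^n - (y - a) * (1 - 2 * real (bdigit a (Suc n)))\<bar>
     \<le> (if \<lfloor>2^Suc n*a\<rfloor> = \<lfloor>2^Suc n*y\<rfloor> then 0 else 2*\<bar>y - a\<bar>)"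
proof (cases "\<lfloor>2^Suc n*a\<rfloor> = \<lfloor>2^Suc n*y\<rfloor>")
  case True
  have e1: "(2::real)^Suc n * a = 2*(2^n*a)" and e2: "(2::real)^Suc n * y = 2*(2^n*y)" by simp_all
  have "psi (2^n*y) - psi (2^n*a) = (if frac (2^n*a) \<ge> 1/2 then -1 else 1) * (2^n*y - 2^n*a)"
    by (rule psi_linear) (use True in \<open>simp only: e1 e2\<close>)
  also have "(if frac (2^n*a) \<ge> 1/2 then -1 else 1) = 1 - 2 * real (bdigit a (Suc n))"
    by (simp add: bdigit_Suc)
  also have "2^n*y - 2^n*a = (2::real)^n*(y-a)" by (simp add: algebra_simps)
  finally have "psi (2^n*y) - psi (2^n*a) = 2^n * ((1 - 2 * real (bdigit a (Suc n))) * (y - a))"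
    by (simp add: algebra_simps)
  hence "(psi (2^n*y) - psi (2^n*a)) / 2^n = (1 - 2 * real (bdigit a (Suc n))) * (y - a)"
    by simp
  then show ?thesis using True by simp
next
  case False
  have "\<bar>psi (2^n*y) - psi (2^n*a)\<bar> \<le> \<bar>2^n*y - 2^n*a\<bar>" by (rule psi_lipschitz)
  also have "\<dots> = 2^n * \<bar>y - a\<bar>"
  proof -
    have "2^n*y - 2^n*a = (2::real)^n*(y-a)" by (simp add: algebra_simps)
    thus ?thesis by (simp add: abs_mult)
  qed
  finally have "\<bar>(psi (2^n*y) - psi (2^n*a)) / 2^n\<bar> \<le> \<bar>y - a\<bar>"
    by (simp add: divide_le_eq mult.commute)
  moreover have "\<bar>(y - a) * (1 - 2 * real (bdigit a (Suc n)))\<bar> \<le> \<bar>y - a\<bar>"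
    using bdigit_le1[of a "Suc n"] by (cases "bdigit a (Suc n)") (auto simp: abs_mult)
  moreover have "\<bar>(psi (2^n*y) - psi (2^n*a)) / 2^n - (y - a) * (1 - 2 * real (bdigit a (Suc n)))\<bar>
     \<le> \<bar>(psi (2^n*y) - psi (2^n*a)) / 2^n\<bar> + \<bar>(y - a) * (1 - 2 * real (bdigit a (Suc n)))\<bar>"
    by (rule abs_triangle_ineq4)
  ultimately have "\<bar>(psi (2^n*y) - psi (2^n*a)) / 2^n - (y - a) * (1 - 2 * real (bdigit a (Suc n)))\<bar>
     \<le> \<bar>y - a\<bar> + \<bar>y - a\<bar>" by (meson add_mono order_trans)
  thus ?thesis using False by simp
qed

lemma G:
  "\<bar>(S y - S a) - (y - a) * Dsum a m - (S (2^m*y) - S (2^m*a)) / 2^m\<bar>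
     \<le> (\<Sum>n<m. if \<lfloor>2^Suc n*a\<rfloor> = \<lfloor>2^Suc n*y\<rfloor> then 0 else 2*\<bar>y - a\<bar>)"
proof -
  have EQ: "(S y - S a) - (y - a) * Dsum a m - (S (2^m*y) - S (2^m*a)) / 2^m
      = (\<Sum>n<m. (psi (2^n*y) - psi (2^n*a)) / 2^n - (y - a) * (1 - 2 * real (bdigit a (Suc n))))"
  proof -
    have d: "(y - a) * Dsum a m = (\<Sum>n<m. (y - a) * (1 - 2 * real (bdigit a (Suc n))))"
      unfolding Dsum_def by (rule sum_distrib_left)
    have e: "S y - S a - (S (2^m*y) - S (2^m*a)) / 2^m = (\<Sum>n<m. (psi (2^n*y) - psi (2^n*a)) / 2^n)"
      using S_split[of y m] S_split[of a m] by (simp add: sum_subtractf diff_divide_distrib)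
    have "(\<Sum>n<m. (psi (2^n*y) - psi (2^n*a)) / 2^n - (y - a) * (1 - 2 * real (bdigit a (Suc n))))
       = (\<Sum>n<m. (psi (2^n*y) - psi (2^n*a)) / 2^n) - (\<Sum>n<m. (y - a) * (1 - 2 * real (bdigit a (Suc n))))"
      by (rule sum_subtractf)
    also have "\<dots> = (S y - S a - (S (2^m*y) - S (2^m*a)) / 2^m) - (y - a) * Dsum a m"
      by (simp only: e d)
    finally show ?thesis by simp
  qed
  have "\<bar>\<Sum>n<m. (psi (2^n*y) - psi (2^n*a)) / 2^n - (y - a) * (1 - 2 * real (bdigit a (Suc n)))\<bar> \<le> (\<Sum>n<m. \<bar>(psi (2^n*y) - psi (2^n*a)) / 2^n - (y - a) * (1 - 2 * real (bdigit a (Suc n)))\<bar>)"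
    by (rule sum_abs)
  also have "\<dots> \<le> (\<Sum>n<m. if \<lfloor>2^Suc n*a\<rfloor> = \<lfloor>2^Suc n*y\<rfloor> then 0 else 2*\<bar>y - a\<bar>)"
    by (rule sum_mono) (rule term_bound)
  finally show ?thesis unfolding EQ .
qed

lemma G_exact:
  assumes "\<And>n. n < m \<Longrightarrow> \<lfloor>2^Suc n*a\<rfloor> = \<lfloor>2^Suc n*y\<rfloor>"
  shows "S y - S a = (y - a) * Dsum a m + (S (2^m*y) - S (2^m*a)) / 2^m"
proof -
  have "(\<Sum>n<m. if \<lfloor>2^Suc n*a\<rfloor> = \<lfloor>2^Suc n*y\<rfloor> then 0 else 2*\<bar>y - a\<bar>) = 0"
    using assms by (intro sum.neutral) auto
  thus ?thesis using G[of y a m] by simp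
qed

lemma S_mod: "\<bar>S y - S a\<bar> \<le> real m * \<bar>y - a\<bar> + 1/2^m"
proof -
  have "S y - S a = (\<Sum>n<m. (psi (2^n*y) - psi (2^n*a)) / 2^n) + (S (2^m*y) - S (2^m*a)) / 2^m"
    using S_split[of y m] S_split[of a m] by (simp add: sum_subtractf diff_divide_distrib)
  moreover have "\<bar>\<Sum>n<m. (psi (2^n*y) - psi (2^n*a)) / 2^n\<bar> \<le> real m * \<bar>y - a\<bar>"
  proof -
    have "\<bar>\<Sum>n<m. (psi (2^n*y) - psi (2^n*a)) / 2^n\<bar> \<le> (\<Sum>n<m. \<bar>(psi (2^n*y) - psi (2^n*a)) / 2^n\<bar>)"
      by (rule sum_abs)
    also have "\<dots> \<le> (\<Sum>n<m. \<bar>y - a\<bar>)"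
    proof (rule sum_mono)
      fix n
      have "\<bar>psi (2^n*y) - psi (2^n*a)\<bar> \<le> \<bar>2^n*y - 2^n*a\<bar>" by (rule psi_lipschitz)
      also have "\<dots> = 2^n * \<bar>y - a\<bar>"
  proof -
    have "2^n*y - 2^n*a = (2::real)^n*(y-a)" by (simp add: algebra_simps)
    thus ?thesis by (simp add: abs_mult)
  qed
      finally show "\<bar>(psi (2^n*y) - psi (2^n*a)) / 2^n\<bar> \<le> \<bar>y - a\<bar>"
        by (simp add: divide_le_eq mult.commute)
    qed
    finally show ?thesis by simp
  qed
  moreover have "\<bar>(S (2^m*y) - S (2^m*a)) / 2^m\<bar> \<le> 1/2^m"
  proof -
    have "\<bar>S (2^m*y) - S (2^m*a)\<bar> \<le> 1"
      using S_nonneg[of "2^m*y"] S_nonneg[of "2^m*a"] S_le1[of "2^m*y"] S_le1[of "2^m*a"] by linarith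
    thus ?thesis by (simp add: divide_right_mono)
  qed
  ultimately show ?thesis using abs_triangle_ineq[of "\<Sum>n<m. (psi (2^n*y) - psi (2^n*a)) / 2^n" "(S (2^m*y) - S (2^m*a)) / 2^m"]
    by simp
qed

lemma tail_bound: "\<bar>(S (2^m*y) - S (2^m*a)) / 2^m\<bar> \<le> 1/2^m"
proof -
  have "\<bar>S (2^m*y) - S (2^m*a)\<bar> \<le> 1"
    using S_nonneg[of "2^m*y"] S_nonneg[of "2^m*a"] S_le1[of "2^m*y"] S_le1[of "2^m*a"] by linarith
  thus ?thesis by (simp add: divide_right_mono)
qed

lemma sum_ge_count: "(\<Sum>n<m. if n0 \<le> n then c else 0) = c * real (m - n0)"
  by (induction m) (auto simp: Suc_diff_le algebra_simps)

lemma bad_frac: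
  fixes x h :: real
  assumes h: "0 < h" "h \<le> 1/2^m" and K: "K \<le> m"
    and bad: "\<lfloor>2^K*x\<rfloor> \<noteq> \<lfloor>2^K*(x+h)\<rfloor>"
  shows "frac (2^K*x) \<ge> 1 - 1/2^(m-K)"
proof -
  have "\<lfloor>2^K*x\<rfloor> \<le> \<lfloor>2^K*(x+h)\<rfloor>" using h by (intro floor_mono) (simp add: algebra_simps)
  hence "\<lfloor>2^K*x\<rfloor> + 1 \<le> \<lfloor>2^K*(x+h)\<rfloor>" using bad by linarith
  hence "real_of_int \<lfloor>2^K*x\<rfloor> + 1 \<le> real_of_int \<lfloor>2^K*(x+h)\<rfloor>" by simp
  moreover have "real_of_int \<lfloor>2^K*(x+h)\<rfloor> \<le> 2^K*(x+h)" by (rule of_int_floor_le)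
  ultimately have "real_of_int \<lfloor>2^K*x\<rfloor> + 1 \<le> 2^K*(x+h)" by linarith
  hence "frac (2^K*x) \<ge> 1 - 2^K*h" by (simp add: frac_def algebra_simps)
  moreover have "2^K*h \<le> (2::real)^K * (1/2^m)" using h by (intro mult_left_mono) auto
  moreover have "(2::real)^K * (1/2^m) = 1/2^(m-K)" using K by (simp add: power_diff)
  ultimately show ?thesis by linarith
qed

lemma bad_sum:
  assumes h: "0 < h" "h \<le> 1/2^m"
    and run: "\<And>K. (\<forall>i. K < i \<and> i \<le> m \<longrightarrow> bdigit x i = 1) \<Longrightarrow> real m - real K \<le> e"
  shows "(\<Sum>n<m. if \<lfloor>2^Suc n*x\<rfloor> = \<lfloor>2^Suc n*(x+h)\<rfloor> then 0 else 2*\<bar>(x+h) - x\<bar>) \<le> 2*h*(e+1)"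
proof (cases "\<exists>n<m. \<lfloor>2^Suc n*x\<rfloor> \<noteq> \<lfloor>2^Suc n*(x+h)\<rfloor>")
  case False
  hence "(\<Sum>n<m. if \<lfloor>2^Suc n*x\<rfloor> = \<lfloor>2^Suc n*(x+h)\<rfloor> then 0 else 2*\<bar>(x+h) - x\<bar>) = 0"
    by (intro sum.neutral) auto
  moreover have "e \<ge> 0" using run[of m] by simp
  ultimately show ?thesis using h by simp
next
  case True
  define n0 where "n0 = (LEAST n. n < m \<and> \<lfloor>2^Suc n*x\<rfloor> \<noteq> \<lfloor>2^Suc n*(x+h)\<rfloor>)"
  have n0: "n0 < m \<and> \<lfloor>2^Suc n0*x\<rfloor> \<noteq> \<lfloor>2^Suc n0*(x+h)\<rfloor>"
    unfolding n0_def using True by (rule LeastI_ex)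
  have le: "\<And>n. n < m \<Longrightarrow> \<lfloor>2^Suc n*x\<rfloor> \<noteq> \<lfloor>2^Suc n*(x+h)\<rfloor> \<Longrightarrow> n0 \<le> n"
    unfolding n0_def by (rule Least_le) simp
  have "(\<Sum>n<m. if \<lfloor>2^Suc n*x\<rfloor> = \<lfloor>2^Suc n*(x+h)\<rfloor> then 0 else 2*\<bar>(x+h) - x\<bar>)
     \<le> (\<Sum>n<m. if n0 \<le> n then 2*h else 0)"
    by (rule sum_mono) (use le h in auto)
  also have "\<dots> = 2*h * real (m - n0)" by (rule sum_ge_count)
  also have "real (m - n0) \<le> e + 1"
  proof -
    have "frac (2^Suc n0*x) \<ge> 1 - 1/2^(m - Suc n0)"
      using n0 by (intro bad_frac[OF h]) auto
    hence "\<forall>i. Suc n0 < i \<and> i \<le> m \<longrightarrow> bdigit x i = 1"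
      using run_ones[where K="Suc n0" and x=x and j="m - Suc n0"] n0 by auto
    hence "real m - real (Suc n0) \<le> e" by (rule run)
    thus ?thesis using n0 by (simp add: of_nat_diff)
  qed
  hence "2*h * real (m - n0) \<le> 2*h*(e+1)" using h by (intro mult_left_mono) auto
  finally show ?thesis by simp
qed

lemma log_floor:
  assumes "0 < h" "h \<le> 1"
  shows "\<exists>m. real m \<le> log 2 (1/h) \<and> log 2 (1/h) < real m + 1 \<and> h \<le> 1/2^m \<and> 1/2^(Suc m) < h"
proof -
  define L where "L = log 2 (1/h)"
  have L0: "L \<ge> 0" using assms unfolding L_def by simp
  define m where "m = nat \<lfloor>L\<rfloor>"
  have m1: "real m \<le> L" "L < real m + 1" using L0 unfolding m_def by linarith+
  have pL: "2 powr L = 1/h" using assms unfolding L_def by simp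
  have "2 powr (real m) \<le> 2 powr L" using m1 by (intro powr_mono) auto
  hence "(2::real)^m \<le> 1/h" using pL by (simp add: powr_realpow)
  hence a: "h \<le> 1/2^m" using assms by (simp add: field_simps)
  have "2 powr L < 2 powr (real (Suc m))" using m1 by (intro powr_less_mono) auto
  moreover have "2 powr (real (Suc m)) = (2::real)^Suc m" by (rule powr_realpow) simp
  ultimately have "1/h < (2::real)^Suc m" using pL by simp
  hence b: "1/2^(Suc m) < h" using assms by (simp add: field_simps del: power_Suc)
  show ?thesis using m1 a b unfolding L_def by blast
qed

lemma Dsum_abs: "\<bar>Dsum a m\<bar> \<le> real m"
proof -
  have "\<bar>Dsum a m\<bar> \<le> (\<Sum>n<m. \<bar>1 - 2 * real (bdigit a (Suc n))\<bar>)"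
    unfolding Dsum_def by (rule sum_abs)
  also have "\<dots> \<le> (\<Sum>n<m. 1)"
  proof (rule sum_mono)
    fix n show "\<bar>1 - 2 * real (bdigit a (Suc n))\<bar> \<le> 1"
      using bdigit_le1[of a "Suc n"] by (cases "bdigit a (Suc n)") auto
  qed
  finally show ?thesis by simp
qed

lemma ratio_est:
  fixes m l h N D c e \<epsilon> :: real
  assumes m: "m \<ge> 1" "m \<le> l" "l < m + 1" and h: "h > 0"
    and N: "\<bar>N - h*D\<bar> \<le> 2*h*(\<epsilon>*m+2)" and D: "\<bar>D\<bar> \<le> m" and Dc: "\<bar>D/m - c\<bar> < e/4"
    and eps: "\<epsilon> = e/4" and m5: "5/m \<le> e/4"
  shows "\<bar>N/(h*l) - c\<bar> < e"
proof -
  have l0: "l > 0" using m by linarith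
  have "5/m > 0" using m by simp
  hence epos: "e > 0" using m5 by linarith
  have a1: "\<bar>(N - h*D)/(h*l)\<bar> = \<bar>N - h*D\<bar>/(h*l)" using h l0 by (simp add: abs_divide abs_mult)
  have a2: "\<bar>N - h*D\<bar>/(h*l) \<le> 2*h*(\<epsilon>*m+2)/(h*l)" by (rule divide_right_mono[OF N]) (use h l0 in simp)
  have a3: "2*h*(\<epsilon>*m+2)/(h*l) = 2*(\<epsilon>*m+2)/l"
    using h by (metis (no_types, opaque_lifting) mult.assoc mult.commute mult_divide_mult_cancel_left_if less_irrefl)
  have a4: "2*(\<epsilon>*m+2)/l \<le> 2*(\<epsilon>*m+2)/m"
    by (rule divide_left_mono) (use m eps epos in auto)
  have a5: "2*(\<epsilon>*m+2)/m = 2*\<epsilon> + 4/m" using m by (simp add: add_divide_distrib)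
  have e1: "\<bar>(N - h*D)/(h*l)\<bar> \<le> 2*\<epsilon> + 4/m"
    unfolding a1 a5[symmetric] by (rule order_trans[OF a2[unfolded a3] a4])
  have b1: "D/l - D/m = D*(m - l)/(l*m)" using m l0 by (simp add: field_simps)
  have b2: "\<bar>D*(m - l)/(l*m)\<bar> = \<bar>D\<bar>*(l - m)/(l*m)" using m l0 by (simp add: abs_mult abs_div_pos)
  have b3: "\<bar>D\<bar>*(l - m)/(l*m) \<le> m*1/(l*m)" using m l0 D by (intro divide_right_mono mult_mono) auto
  have b4: "m*1/(l*m) = 1/l" using m by simp
  have b5: "1/l \<le> 1/m" using m by (intro divide_left_mono) auto
  have e2: "\<bar>D/l - D/m\<bar> \<le> 1/m"
    unfolding b1 b2 by (rule order_trans[OF b3[unfolded b4] b5])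
  have eq: "N/(h*l) - c = (N - h*D)/(h*l) + (D/l - D/m) + (D/m - c)" using h l0 by (simp add: field_simps)
  have t1: "\<bar>(N - h*D)/(h*l) + (D/l - D/m) + (D/m - c)\<bar> \<le> \<bar>(N - h*D)/(h*l) + (D/l - D/m)\<bar> + \<bar>D/m - c\<bar>"
    by (rule abs_triangle_ineq)
  have t2: "\<bar>(N - h*D)/(h*l) + (D/l - D/m)\<bar> \<le> \<bar>(N - h*D)/(h*l)\<bar> + \<bar>D/l - D/m\<bar>"
    by (rule abs_triangle_ineq)
  have "\<bar>N/(h*l) - c\<bar> \<le> \<bar>(N - h*D)/(h*l)\<bar> + \<bar>D/l - D/m\<bar> + \<bar>D/m - c\<bar>"
    unfolding eq by (rule order_trans[OF t1 add_right_mono[OF t2]])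
  moreover have "4/m + 1/m = 5/m" by (simp add: add_divide_distrib[symmetric])
  ultimately show ?thesis using e1 e2 Dc eps m5 by linarith
qed

lemma abs_chain: "\<bar>a - b\<bar> \<le> p \<Longrightarrow> \<bar>b\<bar> \<le> q \<Longrightarrow> \<bar>a\<bar> \<le> p + (q::real)"
  by linarith

lemma A_S:
  assumes Dlim: "(\<lambda>n. Dsum x n / real n) \<longlonglongrightarrow> c"
    and run: "\<forall>\<epsilon>>0. \<exists>M. \<forall>m\<ge>M. \<forall>K. (\<forall>i. K < i \<and> i \<le> m \<longrightarrow> bdigit x i = 1) \<longrightarrow> real m - real K \<le> \<epsilon> * real m"
  shows "((\<lambda>h. (S (x + h) - S x) / (h * log 2 (1 / \<bar>h\<bar>))) \<longlongrightarrow> c) (at_right 0)"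
proof (rule tendstoI)
  fix e :: real assume e: "e > 0"
  have "\<exists>M. \<forall>m\<ge>M. \<forall>K. (\<forall>i. K < i \<and> i \<le> m \<longrightarrow> bdigit x i = 1) \<longrightarrow> real m - real K \<le> (e/4) * real m"
    using e by (intro run[rule_format]) simp
  then obtain M1 where M1: "\<forall>m\<ge>M1. \<forall>K. (\<forall>i. K < i \<and> i \<le> m \<longrightarrow> bdigit x i = 1) \<longrightarrow> real m - real K \<le> (e/4) * real m"
    by blast
  obtain M2 where M2: "\<forall>n\<ge>M2. norm (Dsum x n / real n - c) < e/4"
    using Dlim e unfolding LIMSEQ_iff by (meson divide_pos_pos zero_less_numeral)
  define M where "M = max M1 (max M2 (nat \<lceil>20/e\<rceil>)) + 1"
  show "eventually (\<lambda>h. dist ((S (x + h) - S x) / (h * log 2 (1 / \<bar>h\<bar>))) c < e) (at_right 0)"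
    unfolding eventually_at_right_field
  proof (intro exI[of _ "1/2^(M+1)"] conjI allI impI)
    show "(0::real) < 1/2^(M+1)" by simp
    fix h :: real assume h0: "0 < h" and hd: "h < 1/2^(M+1)"
    have h1: "h \<le> 1" using hd by (smt (verit) one_le_power one_le_numeral divide_le_eq_1)
    obtain m where ml: "real m \<le> log 2 (1/h)" "log 2 (1/h) < real m + 1"
      and mh: "h \<le> 1/2^m" "1/2^(Suc m) < h"
      using log_floor[OF h0 h1] by blast
    have "1/2^(Suc m) < (1::real)/2^(M+1)" using mh hd by linarith
    hence "(2::real)^(M+1) < 2^(Suc m)" by (simp add: field_simps del: power_Suc)
    hence "M + 1 < Suc m" using power_strict_increasing_iff[of "2::real" "M+1" "Suc m"] by simp
    hence Mm: "M \<le> m" by simp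
    have m1: "real m \<ge> 1" using Mm unfolding M_def by simp
    have mM1: "m \<ge> M1" and mM2: "m \<ge> M2" and m20: "real m \<ge> 20/e"
      using Mm unfolding M_def by (auto, linarith)
    have runm: "\<And>K. (\<forall>i. K < i \<and> i \<le> m \<longrightarrow> bdigit x i = 1) \<Longrightarrow> real m - real K \<le> (e/4) * real m"
      using M1 mM1 by blast
    have bs: "(\<Sum>n<m. if \<lfloor>2^Suc n*x\<rfloor> = \<lfloor>2^Suc n*(x+h)\<rfloor> then 0 else 2*\<bar>(x+h) - x\<bar>) \<le> 2*h*((e/4) * real m + 1)"
      by (rule bad_sum[OF h0 mh(1) runm])
    have g: "\<bar>(S (x+h) - S x) - (x + h - x) * Dsum x m - (S (2^m*(x+h)) - S (2^m*x)) / 2^m\<bar>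
     \<le> (\<Sum>n<m. if \<lfloor>2^Suc n*x\<rfloor> = \<lfloor>2^Suc n*(x+h)\<rfloor> then 0 else 2*\<bar>(x+h) - x\<bar>)"
      by (rule G)
    have tb: "\<bar>(S (2^m*(x+h)) - S (2^m*x)) / 2^m\<bar> \<le> 1/2^m" by (rule tail_bound)
    have "(1::real)/2^m = 2 * (1/2^(Suc m))" by simp
    hence tb2: "1/2^m < 2*h" using mh by linarith
    have xh: "x + h - x = h" by simp
    have "\<bar>(S (x+h) - S x) - h * Dsum x m\<bar> \<le> 2*h*((e/4) * real m + 1) + 1/2^m"
      by (rule abs_chain[OF order_trans[OF g[unfolded xh] bs[unfolded xh]] tb])
    hence N: "\<bar>(S (x+h) - S x) - h * Dsum x m\<bar> \<le> 2*h*((e/4) * real m + 2)"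
      using tb2 by (simp add: algebra_simps)
    have "\<bar>(S (x+h) - S x)/(h * log 2 (1/h)) - c\<bar> < e"
    proof (rule ratio_est[OF m1 ml h0 N Dsum_abs _ refl])
      show "\<bar>Dsum x m / real m - c\<bar> < e/4" using M2 mM2 by auto
      show "5 / real m \<le> e/4" using m20 e m1 by (simp add: field_simps)
    qed
    thus "dist ((S (x + h) - S x) / (h * log 2 (1 / \<bar>h\<bar>))) c < e"
      using h0 by (simp add: dist_real_def)
  qed
qed

lemma floor_pow_div:
  fixes y :: real
  assumes "j \<le> B"
  shows "\<lfloor>2^j*y\<rfloor> = \<lfloor>2^B*y\<rfloor> div 2^(B-j)"
proof -
  have pB: "(2::real)^B = 2^j * 2^(B-j)" using assms by (simp add: power_add[symmetric])
  have "real_of_int (2^(B-j)) = (2::real)^(B-j)" by simp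
  hence "(2::real)^j*y = (2^B*y) / real_of_int (2^(B-j))"
    unfolding pB by simp
  hence "\<lfloor>2^j*y\<rfloor> = \<lfloor>(2^B*y) / real_of_int (2^(B-j))\<rfloor>" by simp
  also have "\<dots> = \<lfloor>2^B*y\<rfloor> div 2^(B-j)" by (rule floor_divide_real_eq_div) simp
  finally show ?thesis .
qed

lemma even_div_succ:
  fixes F :: int
  assumes "F mod 2 = 0" "a \<ge> 1"
  shows "(F+1) div 2^a = F div 2^a"
proof -
  have p: "(2::int)^a = 2 * 2^(a-1)" using assms(2) by (simp add: power_eq_if)
  have "(F+1) div 2 = F div 2" using assms(1) by presburger
  thus ?thesis unfolding p by (simp add: zdiv_zmult2_eq)
qed

lemma Dsum_Suc: "Dsum a (Suc m) = Dsum a m + (1 - 2 * real (bdigit a (Suc m)))"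
  unfolding Dsum_def by simp

lemma B_point:
  fixes x :: real and B B2 k :: nat
  assumes d0: "bdigit x B = 0" and B1: "B \<ge> 1" and BB2: "B < B2"
    and ones: "\<And>i. B < i \<Longrightarrow> i < B2 \<Longrightarrow> bdigit x i = 1" and Bk: "B < k"
  defines "F \<equiv> \<lfloor>2^B*x\<rfloor>"
  defines "r \<equiv> real_of_int (F + 1) / 2^B"
  defines "\<eta> \<equiv> 1 / (2::real)^k"
  shows "0 < r - x" "r - x \<le> 2/2^B2"
    "S (r + \<eta>) - S r = \<eta> * (Dsum x B - 2 + real k - real B)"
    "\<bar>S r - S x\<bar> \<le> 2 * real B2 / 2^B2"
proof -
  have Fev: "F mod 2 = 0" using d0 unfolding bdigit_def F_def by simp
  have rB: "2^B * r = real_of_int (F + 1)" unfolding r_def by simp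
  have fr: "frac (2^B*x) = 2^B*x - real_of_int F" unfolding F_def frac_def by simp
  have h1eq: "r - x = (1 - frac (2^B*x)) / 2^B"
    unfolding fr r_def by (simp add: field_simps)
  show h1pos: "0 < r - x" unfolding h1eq using frac_lt_1[of "2^B*x"] by simp
  define j where "j = B2 - 1 - B"
  have "frac (2^B*x) \<ge> 1 - 1/2^j"
    by (rule run_ones_conv) (use ones in \<open>auto simp: j_def\<close>)
  hence "r - x \<le> (1/2^j) / 2^B" unfolding h1eq by (intro divide_right_mono) auto
  also have "(1/2^j) / 2^B = (2::real)/2^B2"
  proof -
    have "B2 = Suc (j + B)" using BB2 unfolding j_def by simp
    thus ?thesis by (simp add: power_add)
  qed
  finally show h1le: "r - x \<le> 2/2^B2" .
  have flB: "\<lfloor>2^B*(r+\<eta>)\<rfloor> = F + 1"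
  proof -
    have "2^B*(r+\<eta>) = real_of_int (F+1) + 1/2^(k-B)"
      unfolding r_def \<eta>_def using Bk by (simp add: field_simps power_diff)
    moreover have "(1::real)/2^(k-B) < 1" using Bk by simp
    moreover have "(0::real) \<le> 1/2^(k-B)" by simp
    ultimately show ?thesis by (simp add: floor_eq_iff)
  qed
  have flr: "\<lfloor>2^B*r\<rfloor> = F + 1" unfolding rB by simp
  have same: "\<And>n. n < B \<Longrightarrow> \<lfloor>2^Suc n*r\<rfloor> = \<lfloor>2^Suc n*(r+\<eta>)\<rfloor>"
    using floor_pow_div flB flr by (metis Suc_leI)
  have Aeq: "S (r+\<eta>) - S r = (r + \<eta> - r) * Dsum r B + (S (2^B*(r+\<eta>)) - S (2^B*r)) / 2^B"
    by (rule G_exact) (use same in auto)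
  have t1: "2^B*(r+\<eta>) = 1/2^(k-B) + real_of_int (F+1)"
    unfolding r_def \<eta>_def using Bk by (simp add: field_simps power_diff)
  have "S (2^B*(r+\<eta>)) - S (2^B*r) = real (k-B) / 2^(k-B)"
    unfolding t1 rB S_int_shift S_int S_pow by simp
  hence tail: "(S (2^B*(r+\<eta>)) - S (2^B*r)) / 2^B = \<eta> * (real k - real B)"
    unfolding \<eta>_def using Bk by (simp add: power_diff of_nat_diff field_simps)
  have dr: "\<And>i. 1 \<le> i \<Longrightarrow> i < B \<Longrightarrow> bdigit r i = bdigit x i"
  proof -
    fix i assume i: "1 \<le> i" "i < B"
    have "\<lfloor>2^i*r\<rfloor> = (F+1) div 2^(B-i)" using floor_pow_div[of i B r] flr i by simp
    also have "\<dots> = F div 2^(B-i)" using Fev i by (intro even_div_succ) auto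
    also have "\<dots> = \<lfloor>2^i*x\<rfloor>" using floor_pow_div[of i B x] i unfolding F_def by simp
    finally show "bdigit r i = bdigit x i" unfolding bdigit_def by simp
  qed
  have "(F+1) mod 2 = 1" using Fev by presburger
  hence drB: "bdigit r B = 1" unfolding bdigit_def flr by simp
  obtain B' where B': "B = Suc B'" using B1 by (cases B) auto
  have "Dsum r B' = Dsum x B'"
    unfolding Dsum_def by (rule sum.cong) (use dr B' in auto)
  hence Dr: "Dsum r B = Dsum x B - 2"
    unfolding B' Dsum_Suc using drB d0 B' by simp
  show "S (r + \<eta>) - S r = \<eta> * (Dsum x B - 2 + real k - real B)"
    unfolding Aeq tail Dr by (simp add: algebra_simps)
  have "\<bar>S (x + (r - x)) - S x\<bar> \<le> real (B2 - 1) * \<bar>x + (r - x) - x\<bar> + 1/2^(B2-1)"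
    by (rule S_mod)
  hence sm: "\<bar>S r - S x\<bar> \<le> real (B2 - 1) * (r - x) + 1/2^(B2-1)" using h1pos by simp
  have "real (B2 - 1) * (r - x) \<le> real (B2 - 1) * (2/2^B2)"
    using h1le by (intro mult_left_mono) auto
  moreover have "(1::real)/2^(B2-1) = 2/2^B2"
  proof -
    have "B2 = Suc (B2 - 1)" using BB2 by simp
    hence "(2::real)^B2 = 2 * 2^(B2-1)" by (metis power_Suc)
    thus ?thesis by simp
  qed
  moreover have "real (B2 - 1) * (2/2^B2) + 2/2^B2 = 2 * real B2 / 2^B2"
    using BB2 by (simp add: of_nat_diff field_simps)
  ultimately show "\<bar>S r - S x\<bar> \<le> 2 * real B2 / 2^B2" using sm by linarith
qed

lemma real_le_pow2: "real g \<le> (2::real)^g"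
proof -
  have "g < 2^g" by (rule less_exp)
  hence "real g \<le> real (2^g)" by simp
  thus ?thesis by simp
qed

lemma L2_arith:
  fixes k g :: nat
  assumes g: "g \<ge> 1" and k: "k \<ge> 1"
  shows "2 * real (k+g) / 2^(k+g) * 2^k / real k \<le> 2/real g + 2/real k"
proof -
  have p: "(2::real)^(k+g) = 2^k * 2^g" by (simp add: power_add)
  have e: "2 * real (k+g) / 2^(k+g) * 2^k / real k = 2/2^g + 2 * real g / (2^g * real k)"
    unfolding p using k by (simp add: field_simps)
  have gp: "real g \<le> 2^g" by (rule real_le_pow2)
  have a: "2/(2::real)^g \<le> 2/real g" using g gp by (intro divide_left_mono) auto
  have "2 * real g / (2^g * real k) \<le> 2 * 2^g / (2^g * real k)"
    using gp k by (intro divide_right_mono) auto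
  also have "\<dots> = 2 / real k" by simp
  finally show ?thesis unfolding e using a by linarith
qed

lemma log_bounds:
  fixes hs :: real and k :: nat
  assumes k: "k \<ge> 1" and lo: "1/2^k \<le> hs" and hi: "hs \<le> 2 * (1/2^k)"
  shows "real k - 1 \<le> log 2 (1/hs)" "log 2 (1/hs) \<le> real k"
proof -
  have hpos: "hs > 0" using lo by (smt (verit) divide_pos_pos zero_less_power)
  have "1/hs \<le> 2^k" using lo hpos by (simp add: field_simps)
  hence "log 2 (1/hs) \<le> log 2 (2^k)" using hpos by (intro log_mono) auto
  thus "log 2 (1/hs) \<le> real k" by simp
  have kk: "(2::real)^k = 2 * 2^(k-1)" using k by (simp add: power_eq_if)
  have "hs \<le> 1/2^(k-1)" using hi unfolding kk by simp
  hence "2^(k-1) \<le> 1/hs" using hpos by (simp add: field_simps)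
  hence "log 2 (2^(k-1)) \<le> log 2 (1/hs)" by (intro log_mono) auto
  thus "real k - 1 \<le> log 2 (1/hs)" using k by (simp add: of_nat_diff)
qed

lemma zd_mono: "strict_mono (enumerate (zero_digits x))"
  by (rule strict_mono_enumerate[OF infinite_zero_digits])

lemma zd_in: "enumerate (zero_digits x) n \<in> zero_digits x"
  by (rule enumerate_in_set[OF infinite_zero_digits])

lemma zd_digit: "bdigit x (enumerate (zero_digits x) n) = 0"
  using zd_in[of x n] unfolding zero_digits_def by simp

lemma zd_ge1: "enumerate (zero_digits x) n \<ge> 1"
  using zd_in[of x n] unfolding zero_digits_def by simp

lemma zd_ge: "n \<le> enumerate (zero_digits x) n"
  by (rule le_enumerate[OF infinite_zero_digits])

lemma zd_gap:
  assumes "enumerate (zero_digits x) j < i" "i < enumerate (zero_digits x) (Suc j)"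
  shows "bdigit x i = 1"
proof (rule ccontr)
  assume "bdigit x i \<noteq> 1"
  hence "bdigit x i = 0" using bdigit_le1[of x i] by simp
  moreover have "i \<ge> 1" using assms(1) zd_ge1[of x j] by simp
  ultimately have "i \<in> zero_digits x" unfolding zero_digits_def by simp
  then obtain n where n: "enumerate (zero_digits x) n = i"
    using enumerate_Ex[OF infinite_zero_digits] by blast
  have "j < n" using assms(1) n zd_mono[of x] by (metis strict_mono_less)
  moreover have "n < Suc j" using assms(2) n zd_mono[of x] by (metis strict_mono_less)
  ultimately show False by simp
qed

lemma B_seq:
  fixes x \<delta> \<theta> :: real and \<sigma> :: "nat \<Rightarrow> nat"
  assumes Dlim: "(\<lambda>n. Dsum x n / real n) \<longlonglongrightarrow> -1"
    and \<sigma>: "strict_mono \<sigma>"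
    and P: "\<And>n. real (enumerate (zero_digits x) (Suc (\<sigma> n))) \<ge> (1+\<delta>) * real (enumerate (zero_digits x) (\<sigma> n))"
    and \<theta>: "0 < \<theta>" "\<theta> < \<delta>"
  shows "\<exists>hs. (\<forall>n. 0 < hs n) \<and> hs \<longlonglongrightarrow> 0 \<and>
     ((\<lambda>n. (S (x + hs n) - S x) / (hs n * log 2 (1 / \<bar>hs n\<bar>))) \<longlonglongrightarrow> (\<theta> - 1)/(1 + \<theta>))"
proof -
  define b where "b = enumerate (zero_digits x)"
  define B where "B n = b (\<sigma> n)" for n
  define B2 where "B2 n = b (Suc (\<sigma> n))" for n
  define k where "k n = nat \<lceil>(1+\<theta>) * real (B n)\<rceil>" for n
  define r where "r n = real_of_int (\<lfloor>2^(B n)*x\<rfloor> + 1) / 2^(B n)" for n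
  define \<eta> where "\<eta> n = 1 / (2::real)^(k n)" for n
  define hs where "hs n = r n - x + \<eta> n" for n
  define g where "g n = B2 n - k n" for n
  have B1: "B n \<ge> 1" for n unfolding B_def b_def by (rule zd_ge1)
  have Bn: "n \<le> B n" for n
    using seq_suble[OF \<sigma>, of n] zd_ge[of "\<sigma> n" x] unfolding B_def b_def by linarith
  have BB2: "B n < B2 n" for n
    unfolding B_def B2_def b_def using zd_mono[of x] by (simp add: strict_mono_less)
  have PB: "real (B2 n) \<ge> (1+\<delta>) * real (B n)" for n unfolding B_def B2_def b_def by (rule P)
  have kge: "(1+\<theta>)*real (B n) \<le> real (k n)" and klt: "real (k n) < (1+\<theta>)*real (B n) + 1" for n
  proof -
    have y0: "(1+\<theta>)*real (B n) \<ge> 0" using \<theta> by simp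
    hence "real (k n) = of_int \<lceil>(1+\<theta>) * real (B n)\<rceil>" unfolding k_def by simp
    thus "(1+\<theta>)*real (B n) \<le> real (k n)" "real (k n) < (1+\<theta>)*real (B n) + 1"
      using ceiling_correct[of "(1+\<theta>) * real (B n)"] by auto
  qed
  have Bk: "B n < k n" for n
  proof -
    have "real (B n) < (1+\<theta>)*real (B n)" using \<theta> B1[of n] by simp
    thus ?thesis using kge[of n] by linarith
  qed
  have k1: "k n \<ge> 1" for n using Bk[of n] B1[of n] by linarith
  have BP: "0 < r n - x \<and> r n - x \<le> 2/2^(B2 n) \<and>
    S (r n + \<eta> n) - S (r n) = \<eta> n * (Dsum x (B n) - 2 + real (k n) - real (B n)) \<and>
    \<bar>S (r n) - S x\<bar> \<le> 2 * real (B2 n) / 2^(B2 n)" for n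
  proof -
    have d0: "bdigit x (B n) = 0" unfolding B_def b_def by (rule zd_digit)
    have ones: "\<And>i. B n < i \<Longrightarrow> i < B2 n \<Longrightarrow> bdigit x i = 1" unfolding B_def B2_def b_def by (rule zd_gap)
    note bp = B_point[of x "B n" "B2 n" "k n", OF d0 B1 BB2 ones Bk]
    show ?thesis using bp unfolding r_def \<eta>_def by auto
  qed
  have h1pos: "0 < r n - x" and h1le: "r n - x \<le> 2/2^(B2 n)"
    and Aeq: "S (r n + \<eta> n) - S (r n) = \<eta> n * (Dsum x (B n) - 2 + real (k n) - real (B n))"
    and Bb: "\<bar>S (r n) - S x\<bar> \<le> 2 * real (B2 n) / 2^(B2 n)" for n
    using BP[of n] by auto
  have Binf: "filterlim (\<lambda>n. real (B n)) at_top sequentially"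
    by (rule filterlim_at_top_mono[OF filterlim_real_sequentially]) (use Bn in auto)
  have kinf: "filterlim (\<lambda>n. real (k n)) at_top sequentially"
    by (rule filterlim_at_top_mono[OF Binf]) (use Bk in \<open>auto intro!: always_eventually less_imp_le\<close>)
  have invB: "(\<lambda>n. 1 / real (B n)) \<longlonglongrightarrow> 0"
    using tendsto_inverse_0_at_top[OF Binf] by (simp add: inverse_eq_divide)
  have invk: "(\<lambda>n. 1 / real (k n)) \<longlonglongrightarrow> 0"
    using tendsto_inverse_0_at_top[OF kinf] by (simp add: inverse_eq_divide)
  have kB: "(\<lambda>n. real (k n) / real (B n)) \<longlonglongrightarrow> 1 + \<theta>"
  proof (rule tendsto_sandwich[of "\<lambda>n. 1 + \<theta>" _ _ "\<lambda>n. (1 + \<theta>) + 1 / real (B n)"])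
    show "\<forall>\<^sub>F n in sequentially. 1 + \<theta> \<le> real (k n) / real (B n)"
    proof (intro always_eventually allI)
      fix n
      show "1 + \<theta> \<le> real (k n) / real (B n)" using kge[of n] B1[of n] by (simp add: field_simps)
    qed
    show "\<forall>\<^sub>F n in sequentially. real (k n) / real (B n) \<le> (1 + \<theta>) + 1 / real (B n)"
    proof (intro always_eventually allI)
      fix n
      have "real (k n) \<le> (1+\<theta>)*real (B n) + 1" using klt[of n] by simp
      thus "real (k n) / real (B n) \<le> (1 + \<theta>) + 1 / real (B n)" using B1[of n] by (simp add: field_simps)
    qed
    show "((\<lambda>n. (1 + \<theta>) + 1 / real (B n)) \<longlongrightarrow> 1 + \<theta>) sequentially"
      using tendsto_add[OF tendsto_const invB] by simp
  qed simp
  have Bk_lim: "(\<lambda>n. real (B n) / real (k n)) \<longlonglongrightarrow> 1 / (1 + \<theta>)"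
  proof -
    have "(\<lambda>n. inverse (real (k n) / real (B n))) \<longlonglongrightarrow> inverse (1 + \<theta>)"
      by (rule tendsto_inverse[OF kB]) (use \<theta> in simp)
    thus ?thesis by (simp add: inverse_eq_divide)
  qed
  have DB: "(\<lambda>n. Dsum x (B n) / real (B n)) \<longlonglongrightarrow> -1"
    using LIMSEQ_subseq_LIMSEQ[OF Dlim strict_mono_o[OF zd_mono \<sigma>]]
    unfolding B_def b_def comp_def .
  have L1: "(\<lambda>n. (Dsum x (B n) - 2 + real (k n) - real (B n)) / real (k n)) \<longlonglongrightarrow> (\<theta> - 1)/(1 + \<theta>)"
  proof -
    have "(\<lambda>n. (Dsum x (B n) / real (B n)) * (real (B n) / real (k n)) - 2 * (1 / real (k n)) + 1 - real (B n) / real (k n))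
       \<longlonglongrightarrow> (-1) * (1 / (1 + \<theta>)) - 2 * 0 + 1 - 1 / (1 + \<theta>)"
      by (intro tendsto_intros DB Bk_lim invk)
    moreover have "(-1) * (1 / (1 + \<theta>)) - 2 * 0 + 1 - 1 / (1 + \<theta>) = (\<theta> - 1)/(1 + \<theta>)"
    proof -
      have t: "1 + \<theta> \<noteq> 0" using \<theta> by simp
      have "(\<theta> - 1)/(1+\<theta>) = ((1+\<theta>) - 2)/(1+\<theta>)" by simp
      also have "\<dots> = (1+\<theta>)/(1+\<theta>) - 2/(1+\<theta>)" by (rule diff_divide_distrib)
      also have "\<dots> = 1 - 2/(1+\<theta>)" using t by simp
      finally have e: "(\<theta> - 1)/(1+\<theta>) = 1 - 2/(1+\<theta>)" .
      show ?thesis unfolding e by simp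
    qed
    moreover have "(Dsum x (B n) / real (B n)) * (real (B n) / real (k n)) - 2 * (1 / real (k n)) + 1 - real (B n) / real (k n)
       = (Dsum x (B n) - 2 + real (k n) - real (B n)) / real (k n)" for n
      using B1[of n] k1[of n] by (simp add: field_simps)
    ultimately show ?thesis by simp
  qed
  have dt: "\<delta> - \<theta> > 0" using \<theta> by simp
  have gev: "\<forall>\<^sub>F n in sequentially. 1 \<le> g n \<and> real (g n) = real (B2 n) - real (k n) \<and> (\<delta>-\<theta>)*real (B n) - 1 \<le> real (g n)"
  proof -
    have "\<forall>\<^sub>F n in sequentially. 2/(\<delta>-\<theta>) \<le> real (B n)"
      using Binf unfolding filterlim_at_top by blast
    thus ?thesis
    proof (rule eventually_mono)
      fix n assume a: "2/(\<delta>-\<theta>) \<le> real (B n)"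
      have "2 \<le> (\<delta>-\<theta>)*real (B n)" using a dt by (simp add: field_simps)
      moreover have "real (B2 n) - real (k n) > (\<delta>-\<theta>)*real (B n) - 1"
        using PB[of n] klt[of n] by (simp add: algebra_simps)
      ultimately have c: "real (B2 n) - real (k n) > 1" by linarith
      hence "k n < B2 n" by linarith
      hence rg: "real (g n) = real (B2 n) - real (k n)" unfolding g_def by (simp add: of_nat_diff)
      hence "1 \<le> g n" using c by linarith
      thus "1 \<le> g n \<and> real (g n) = real (B2 n) - real (k n) \<and> (\<delta>-\<theta>)*real (B n) - 1 \<le> real (g n)"
        using rg \<open>real (B2 n) - real (k n) > (\<delta>-\<theta>)*real (B n) - 1\<close> by linarith
    qed
  qed
  have ginf: "filterlim (\<lambda>n. real (g n)) at_top sequentially"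
  proof (rule filterlim_at_top_mono)
    show "filterlim (\<lambda>n. -1 + (\<delta>-\<theta>)*real (B n)) at_top sequentially"
      by (rule filterlim_tendsto_add_at_top[OF tendsto_const filterlim_tendsto_pos_mult_at_top[OF tendsto_const dt Binf]])
    show "\<forall>\<^sub>F n in sequentially. -1 + (\<delta>-\<theta>)*real (B n) \<le> real (g n)"
      using gev by (rule eventually_mono) simp
  qed
  have invg: "(\<lambda>n. 1 / real (g n)) \<longlonglongrightarrow> 0"
    using tendsto_inverse_0_at_top[OF ginf] by (simp add: inverse_eq_divide)
  have B2eq: "\<forall>\<^sub>F n in sequentially. B2 n = k n + g n \<and> 1 \<le> g n"
    using gev by (rule eventually_mono) (simp add: g_def)
  have L2: "(\<lambda>n. (S (r n) - S x) / (\<eta> n * real (k n))) \<longlonglongrightarrow> 0"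
  proof (rule Lim_null_comparison)
    show "((\<lambda>n. 2 / real (g n) + 2 / real (k n)) \<longlongrightarrow> 0) sequentially"
      using tendsto_add[OF tendsto_mult[OF tendsto_const invg] tendsto_mult[OF tendsto_const invk], of 2 2] by simp
    show "\<forall>\<^sub>F n in sequentially. norm ((S (r n) - S x) / (\<eta> n * real (k n))) \<le> 2 / real (g n) + 2 / real (k n)"
      using B2eq
    proof (rule eventually_mono)
      fix n assume a: "B2 n = k n + g n \<and> 1 \<le> g n"
      have kp: "real (k n) > 0" using k1[of n] by simp
      have e: "(S (r n) - S x) / (\<eta> n * real (k n)) = (S (r n) - S x) * 2^(k n) / real (k n)"
        unfolding \<eta>_def using kp by (simp add: field_simps)
      have "norm ((S (r n) - S x) / (\<eta> n * real (k n))) = \<bar>S (r n) - S x\<bar> * 2^(k n) / real (k n)"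
        unfolding e real_norm_def using kp by (simp add: abs_divide abs_mult)
      also have "\<dots> \<le> 2 * real (B2 n) / 2^(B2 n) * 2^(k n) / real (k n)"
        using Bb[of n] kp by (intro divide_right_mono mult_right_mono) auto
      also have "\<dots> \<le> 2 / real (g n) + 2 / real (k n)"
        using L2_arith[of "g n" "k n"] a k1[of n] by simp
      finally show "norm ((S (r n) - S x) / (\<eta> n * real (k n))) \<le> 2 / real (g n) + 2 / real (k n)" .
    qed
  qed
  have \<eta>pos: "\<eta> n > 0" for n unfolding \<eta>_def by simp
  have hs_lo: "\<eta> n \<le> hs n" for n unfolding hs_def using h1pos[of n] by simp
  have hsb: "\<forall>\<^sub>F n in sequentially. hs n \<le> 2 * \<eta> n \<and> hs n \<le> \<eta> n * (1 + 2 / real (g n))"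
    using B2eq
  proof (rule eventually_mono)
    fix n assume a: "B2 n = k n + g n \<and> 1 \<le> g n"
    have "2/(2::real)^(B2 n) = \<eta> n * (2/2^(g n))" unfolding \<eta>_def using a by (simp add: power_add)
    hence h1: "r n - x \<le> \<eta> n * (2/2^(g n))" using h1le[of n] by simp
    have "(2::real)^1 \<le> 2^(g n)" using a by (intro power_increasing) auto
    hence c1: "2/(2::real)^(g n) \<le> 1" by simp
    have c2: "2/(2::real)^(g n) \<le> 2/real (g n)"
      using real_le_pow2[of "g n"] a by (intro divide_left_mono) auto
    have "\<eta> n * (2/2^(g n)) \<le> \<eta> n * 1" using c1 \<eta>pos[of n] by (intro mult_left_mono) auto
    moreover have "\<eta> n * (2/2^(g n)) \<le> \<eta> n * (2/real (g n))" using c2 \<eta>pos[of n] by (intro mult_left_mono) auto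
    ultimately show "hs n \<le> 2 * \<eta> n \<and> hs n \<le> \<eta> n * (1 + 2 / real (g n))"
      using h1 unfolding hs_def by (simp add: algebra_simps)
  qed
  have lb: "\<forall>\<^sub>F n in sequentially. real (k n) - 1 \<le> log 2 (1/hs n) \<and> log 2 (1/hs n) \<le> real (k n)"
    using hsb
  proof (rule eventually_mono)
    fix n assume a: "hs n \<le> 2 * \<eta> n \<and> hs n \<le> \<eta> n * (1 + 2 / real (g n))"
    show "real (k n) - 1 \<le> log 2 (1/hs n) \<and> log 2 (1/hs n) \<le> real (k n)"
      using log_bounds[OF k1[of n], of "hs n"] hs_lo[of n] a unfolding \<eta>_def by auto
  qed
  have L3: "(\<lambda>n. hs n * log 2 (1/hs n) / (\<eta> n * real (k n))) \<longlonglongrightarrow> 1"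
  proof (rule tendsto_sandwich[of "\<lambda>n. 1 - 1 / real (k n)" _ _ "\<lambda>n. 1 + 2 / real (g n)"])
    show "\<forall>\<^sub>F n in sequentially. 1 - 1 / real (k n) \<le> hs n * log 2 (1/hs n) / (\<eta> n * real (k n))"
      using lb
    proof (rule eventually_mono)
      fix n assume a: "real (k n) - 1 \<le> log 2 (1/hs n) \<and> log 2 (1/hs n) \<le> real (k n)"
      have kp: "real (k n) \<ge> 1" using k1[of n] by simp
      have "\<eta> n * (real (k n) - 1) \<le> hs n * log 2 (1/hs n)"
        using hs_lo[of n] a \<eta>pos[of n] kp by (intro mult_mono) auto
      hence "\<eta> n * (real (k n) - 1) / (\<eta> n * real (k n)) \<le> hs n * log 2 (1/hs n) / (\<eta> n * real (k n))"
        using \<eta>pos[of n] kp by (intro divide_right_mono) auto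
      moreover have "\<eta> n * (real (k n) - 1) / (\<eta> n * real (k n)) = 1 - 1 / real (k n)"
        using \<eta>pos[of n] kp by (simp add: field_simps)
      ultimately show "1 - 1 / real (k n) \<le> hs n * log 2 (1/hs n) / (\<eta> n * real (k n))" by simp
    qed
    show "\<forall>\<^sub>F n in sequentially. hs n * log 2 (1/hs n) / (\<eta> n * real (k n)) \<le> 1 + 2 / real (g n)"
      using eventually_conj[OF lb hsb]
    proof (rule eventually_mono)
      fix n assume a: "(real (k n) - 1 \<le> log 2 (1/hs n) \<and> log 2 (1/hs n) \<le> real (k n)) \<and>
          (hs n \<le> 2 * \<eta> n \<and> hs n \<le> \<eta> n * (1 + 2 / real (g n)))"
      have kp: "real (k n) \<ge> 1" using k1[of n] by simp
      have hp: "hs n \<ge> 0" using hs_lo[of n] \<eta>pos[of n] by simp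
      have "hs n * log 2 (1/hs n) \<le> (\<eta> n * (1 + 2 / real (g n))) * real (k n)"
        using a hp kp by (intro mult_mono) auto
      hence "hs n * log 2 (1/hs n) / (\<eta> n * real (k n)) \<le> (\<eta> n * (1 + 2 / real (g n))) * real (k n) / (\<eta> n * real (k n))"
        using \<eta>pos[of n] kp by (intro divide_right_mono) auto
      moreover have "(\<eta> n * (1 + 2 / real (g n))) * real (k n) / (\<eta> n * real (k n)) = 1 + 2 / real (g n)"
        using \<eta>pos[of n] kp by simp
      ultimately show "hs n * log 2 (1/hs n) / (\<eta> n * real (k n)) \<le> 1 + 2 / real (g n)" by simp
    qed
    show "(\<lambda>n. 1 - 1 / real (k n)) \<longlonglongrightarrow> 1" using tendsto_diff[OF tendsto_const invk, of 1] by simp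
    show "(\<lambda>n. 1 + 2 / real (g n)) \<longlonglongrightarrow> 1"
      using tendsto_add[OF tendsto_const tendsto_mult[OF tendsto_const invg], of 1 2] by simp
  qed
  have hspos: "\<forall>n. 0 < hs n" using hs_lo \<eta>pos by (meson less_le_trans)
  have hs0: "hs \<longlonglongrightarrow> 0"
  proof (rule Lim_null_comparison)
    show "(\<lambda>n. 2 * (1 / real (k n))) \<longlonglongrightarrow> 0" using tendsto_mult[OF tendsto_const invk, of 2] by simp
    show "\<forall>\<^sub>F n in sequentially. norm (hs n) \<le> 2 * (1 / real (k n))"
      using hsb
    proof (rule eventually_mono)
      fix n assume a: "hs n \<le> 2 * \<eta> n \<and> hs n \<le> \<eta> n * (1 + 2 / real (g n))"
      have "\<eta> n \<le> 1 / real (k n)"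
        unfolding \<eta>_def using real_le_pow2[of "k n"] k1[of n] by (intro divide_left_mono) auto
      hence "2 * \<eta> n \<le> 2 * (1 / real (k n))" by simp
      moreover have "norm (hs n) = hs n" using hspos[rule_format, of n] by simp
      ultimately show "norm (hs n) \<le> 2 * (1 / real (k n))" using a by linarith
    qed
  qed
  have eq: "(S (x + hs n) - S x) / (hs n * log 2 (1 / \<bar>hs n\<bar>))
     = ((Dsum x (B n) - 2 + real (k n) - real (B n)) / real (k n) + (S (r n) - S x) / (\<eta> n * real (k n)))
       / (hs n * log 2 (1/hs n) / (\<eta> n * real (k n)))" for n
  proof -
    have xh: "x + hs n = r n + \<eta> n" unfolding hs_def by simp
    have ab: "\<bar>hs n\<bar> = hs n" using hspos[rule_format, of n] by simp
    have kp: "real (k n) > 0" using k1[of n] by simp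
    have nz: "\<eta> n * real (k n) \<noteq> 0" using \<eta>pos[of n] kp by simp
    have "S (x + hs n) - S x = (S (r n + \<eta> n) - S (r n)) + (S (r n) - S x)" unfolding xh by simp
    also have "\<dots> = \<eta> n * (Dsum x (B n) - 2 + real (k n) - real (B n)) + (S (r n) - S x)"
      unfolding Aeq ..
    finally have num: "S (x + hs n) - S x = \<eta> n * (Dsum x (B n) - 2 + real (k n) - real (B n)) + (S (r n) - S x)" .
    have "(\<eta> n * (Dsum x (B n) - 2 + real (k n) - real (B n)) + (S (r n) - S x)) / (\<eta> n * real (k n))
       = (Dsum x (B n) - 2 + real (k n) - real (B n)) / real (k n) + (S (r n) - S x) / (\<eta> n * real (k n))"
      using \<eta>pos[of n] kp by (simp add: add_divide_distrib)
    moreover have "\<And>u v. u / v = (u / (\<eta> n * real (k n))) / (v / (\<eta> n * real (k n)))"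
      using nz by simp
    ultimately show ?thesis unfolding num ab by metis
  qed
  have "(\<lambda>n. ((Dsum x (B n) - 2 + real (k n) - real (B n)) / real (k n) + (S (r n) - S x) / (\<eta> n * real (k n)))
       / (hs n * log 2 (1/hs n) / (\<eta> n * real (k n)))) \<longlonglongrightarrow> ((\<theta> - 1)/(1 + \<theta>) + 0) / 1"
    by (rule tendsto_divide[OF tendsto_add[OF L1 L2] L3]) simp
  hence "(\<lambda>n. (S (x + hs n) - S x) / (hs n * log 2 (1 / \<bar>hs n\<bar>))) \<longlonglongrightarrow> (\<theta> - 1)/(1 + \<theta>)"
    unfolding eq by simp
  thus ?thesis using hspos hs0 by blast
qed

lemma sum_shift1: "(\<Sum>k=1..n. f k) = (\<Sum>i<n. f (Suc i) :: real)"
  by (induction n) (auto simp: atLeastAtMostSuc_conv)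

lemma Dsum_eq: "Dsum x n = real n - 2 * (\<Sum>k=1..n. real (bdigit x k))"
  unfolding Dsum_def sum_shift1 by (simp add: sum_subtractf sum_distrib_left)

lemma Dsum_lim:
  assumes "(\<lambda>n. (\<Sum>k=1..n. real (bdigit x k)) / real n) \<longlonglongrightarrow> d1"
  shows "(\<lambda>n. Dsum x n / real n) \<longlonglongrightarrow> 1 - 2 * d1"
proof -
  have "(\<lambda>n. 1 - 2 * ((\<Sum>k=1..n. real (bdigit x k)) / real n)) \<longlonglongrightarrow> 1 - 2 * d1"
    by (intro tendsto_intros assms)
  moreover have "\<forall>\<^sub>F n in sequentially. 1 - 2 * ((\<Sum>k=1..n. real (bdigit x k)) / real n) = Dsum x n / real n"
    unfolding eventually_sequentially
    by (rule exI[of _ 1]) (auto simp: Dsum_eq field_simps)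
  ultimately show ?thesis by (rule Lim_transform_eventually)
qed

lemma csum_run:
  assumes "\<forall>i. K < i \<and> i \<le> m \<longrightarrow> bdigit x i = 1" "K \<le> m"
  shows "(\<Sum>k=1..m. real (bdigit x k)) = (\<Sum>k=1..K. real (bdigit x k)) + (real m - real K)"
  using assms
proof (induction m)
  case 0 then show ?case by simp
next
  case (Suc m)
  show ?case
  proof (cases "K = Suc m")
    case True then show ?thesis by simp
  next
    case False
    hence "K \<le> m" using Suc.prems by simp
    hence ih: "(\<Sum>k=1..m. real (bdigit x k)) = (\<Sum>k=1..K. real (bdigit x k)) + (real m - real K)"
      using Suc by auto
    have "bdigit x (Suc m) = 1" using Suc.prems \<open>K \<le> m\<close> by auto
    thus ?thesis using ih by (simp add: atLeastAtMostSuc_conv)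
  qed
qed

lemma run_i:
  assumes d1: "(\<lambda>n. (\<Sum>k=1..n. real (bdigit x k)) / real n) \<longlonglongrightarrow> d1" and lt: "d1 < 1"
  shows "\<forall>\<epsilon>>0. \<exists>M. \<forall>m\<ge>M. \<forall>K. (\<forall>i. K < i \<and> i \<le> m \<longrightarrow> bdigit x i = 1) \<longrightarrow> real m - real K \<le> \<epsilon> * real m"
proof (intro allI impI)
  fix \<epsilon> :: real assume e: "\<epsilon> > 0"
  define c where "c n = (\<Sum>k=1..n. real (bdigit x k))" for n
  define e' where "e' = \<epsilon> * (1 - d1) / 4"
  have e'p: "e' > 0" unfolding e'_def using e lt by simp
  obtain N where N: "\<forall>n\<ge>N. norm (c n / real n - d1) < e'"
    using d1 e'p unfolding LIMSEQ_iff c_def by blast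
  define C where "C = real N * (1 + \<bar>d1\<bar>)"
  have cb: "\<bar>c n - d1 * real n\<bar> \<le> e' * real n + C" for n
  proof (cases "n \<ge> max N 1")
    case True
    hence "\<bar>c n / real n - d1\<bar> < e'" using N by auto
    moreover have "c n - d1 * real n = (c n / real n - d1) * real n" using True by (simp add: field_simps)
    ultimately have "\<bar>c n - d1 * real n\<bar> \<le> e' * real n" using True by (simp add: abs_mult mult_right_mono)
    moreover have "C \<ge> 0" unfolding C_def by simp
    ultimately show ?thesis by linarith
  next
    case False
    hence nN: "real n \<le> real N" by auto
    have "0 \<le> c n" unfolding c_def by (simp add: sum_nonneg)
    moreover have "c n \<le> real n"
    proof -
      have "c n \<le> (\<Sum>k=1..n. 1)" unfolding c_def by (rule sum_mono) (metis bdigit_le1 of_nat_le_1_iff)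
      thus ?thesis by simp
    qed
    moreover have "\<bar>d1 * real n\<bar> \<le> \<bar>d1\<bar> * real N" using nN by (simp add: abs_mult mult_left_mono)
    ultimately have "\<bar>c n - d1 * real n\<bar> \<le> real N + \<bar>d1\<bar> * real N" using nN by linarith
    moreover have "e' * real n \<ge> 0" using e'p by simp
    ultimately show ?thesis unfolding C_def by (simp add: algebra_simps)
  qed
  define M where "M = nat \<lceil>4 * C / ((1 - d1) * \<epsilon>)\<rceil> + 1"
  show "\<exists>M. \<forall>m\<ge>M. \<forall>K. (\<forall>i. K < i \<and> i \<le> m \<longrightarrow> bdigit x i = 1) \<longrightarrow> real m - real K \<le> \<epsilon> * real m"
  proof (intro exI[of _ M] allI impI)
    fix m K assume mM: "M \<le> m" and run: "\<forall>i. K < i \<and> i \<le> m \<longrightarrow> bdigit x i = 1"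
    show "real m - real K \<le> \<epsilon> * real m"
    proof (cases "K \<le> m")
      case False
      hence "real m - real K \<le> 0" by simp
      moreover have "\<epsilon> * real m \<ge> 0" using e by simp
      ultimately show ?thesis by linarith
    next
      case True
      have cs: "c m = c K + (real m - real K)" unfolding c_def by (rule csum_run[OF run True])
      have "(1 - d1) * (real m - real K) = (c m - d1 * real m) - (c K - d1 * real K)"
        using cs by (simp add: algebra_simps)
      also have "\<dots> \<le> (e' * real m + C) + (e' * real K + C)"
        using cb[of m] cb[of K] by linarith
      also have "\<dots> \<le> 2 * e' * real m + 2 * C" using True e'p by (simp add: mult_left_mono)
      finally have a: "(1 - d1) * (real m - real K) \<le> 2 * e' * real m + 2 * C" .
      have d: "1 - d1 > 0" using lt by simp
      have "real m \<ge> 4 * C / ((1 - d1) * \<epsilon>)" using mM unfolding M_def by linarith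
      hence "(1 - d1) * \<epsilon> * real m \<ge> 4 * C" using d e by (simp add: field_simps)
      hence "2 * C \<le> (1 - d1) * \<epsilon> * real m / 2" by simp
      moreover have "2 * e' * real m = (1 - d1) * \<epsilon> * real m / 2" unfolding e'_def by simp
      ultimately have "(1 - d1) * (real m - real K) \<le> (1 - d1) * \<epsilon> * real m" using a by linarith
      hence "(1 - d1) * (real m - real K) \<le> (1 - d1) * (\<epsilon> * real m)" by (simp add: mult.assoc)
      thus ?thesis using d by (simp add: mult_le_cancel_left_pos)
    qed
  qed
qed

lemma run_ii:
  assumes ratio: "(\<lambda>n. real (enumerate (zero_digits x) (Suc n)) / real (enumerate (zero_digits x) n)) \<longlonglongrightarrow> 1"
  shows "\<forall>\<epsilon>>0. \<exists>M. \<forall>m\<ge>M. \<forall>K. (\<forall>i. K < i \<and> i \<le> m \<longrightarrow> bdigit x i = 1) \<longrightarrow> real m - real K \<le> \<epsilon> * real m"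
proof (intro allI impI)
  fix \<epsilon> :: real assume e: "\<epsilon> > 0"
  define b where "b = enumerate (zero_digits x)"
  have bm: "strict_mono b" unfolding b_def by (rule zd_mono)
  have b1: "b n \<ge> 1" for n unfolding b_def by (rule zd_ge1)
  have bd: "bdigit x (b n) = 0" for n unfolding b_def by (rule zd_digit)
  have bge: "n \<le> b n" for n unfolding b_def by (rule zd_ge)
  obtain J where J: "\<forall>j\<ge>J. norm (real (b (Suc j)) / real (b j) - 1) < \<epsilon>"
    using ratio e unfolding LIMSEQ_iff b_def by blast
  show "\<exists>M. \<forall>m\<ge>M. \<forall>K. (\<forall>i. K < i \<and> i \<le> m \<longrightarrow> bdigit x i = 1) \<longrightarrow> real m - real K \<le> \<epsilon> * real m"
  proof (intro exI[of _ "b J + 1"] allI impI)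
    fix m K assume mM: "b J + 1 \<le> m" and run: "\<forall>i. K < i \<and> i \<le> m \<longrightarrow> bdigit x i = 1"
    show "real m - real K \<le> \<epsilon> * real m"
    proof (cases "K < m")
      case False
      hence "real m - real K \<le> 0" by simp
      moreover have "\<epsilon> * real m \<ge> 0" using e by simp
      ultimately show ?thesis by linarith
    next
      case True
      have b0J: "b 0 \<le> b J" using bm by (simp add: strict_mono_less_eq)
      have Kb0: "b 0 \<le> K"
      proof (rule ccontr)
        assume "\<not> b 0 \<le> K"
        hence "K < b 0 \<and> b 0 \<le> m" using b0J mM by simp
        hence "bdigit x (b 0) = 1" using run by blast
        thus False using bd[of 0] by simp
      qed
      define A where "A = {j. b j \<le> K}"
      have finA: "finite A"
      proof (rule finite_subset)
        show "A \<subseteq> {..K}" unfolding A_def using bge by (auto intro: le_trans)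
      qed simp
      have A0: "0 \<in> A" unfolding A_def using Kb0 by simp
      define j where "j = Max A"
      have jA: "j \<in> A" unfolding j_def using finA A0 by (intro Max_in) auto
      hence bj: "b j \<le> K" unfolding A_def by simp
      have "Suc j \<notin> A"
      proof
        assume "Suc j \<in> A"
        hence "Suc j \<le> j" unfolding j_def using finA by (simp add: Max_ge)
        thus False by simp
      qed
      hence bSj: "K < b (Suc j)" unfolding A_def by simp
      have bSm: "m < b (Suc j)"
      proof (rule ccontr)
        assume "\<not> m < b (Suc j)"
        hence "bdigit x (b (Suc j)) = 1" using run bSj by simp
        thus False using bd by simp
      qed
      have jJ: "J \<le> j"
      proof (rule ccontr)
        assume "\<not> J \<le> j"
        hence "Suc j \<le> J" by simp
        hence "b (Suc j) \<le> b J" using bm by (simp add: strict_mono_less_eq)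
        thus False using bSm mM by simp
      qed
      have "real (b (Suc j)) / real (b j) - 1 < \<epsilon>" using J jJ by auto
      hence "real (b (Suc j)) < (1 + \<epsilon>) * real (b j)" using b1[of j] by (simp add: field_simps)
      hence "real m - real K < \<epsilon> * real (b j)" using bSm bj by (simp add: algebra_simps)
      moreover have "\<epsilon> * real (b j) \<le> \<epsilon> * real m" using bj True e by (intro mult_left_mono) auto
      ultimately show ?thesis by linarith
    qed
  qed
qed

lemma takagi_S_eventually:
  assumes "0 \<le> x" "x < 1"
  shows "\<forall>\<^sub>F h in at_right 0. (takagi (x + h) - takagi x) / (h * log 2 (1 / \<bar>h\<bar>))
                         = (S (x + h) - S x) / (h * log 2 (1 / \<bar>h\<bar>))"
  unfolding eventually_at_right_field
proof (intro exI[of _ "1 - x"] conjI allI impI)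
  show "(0::real) < 1 - x" using assms by simp
  fix h :: real assume "0 < h" "h < 1 - x"
  thus "(takagi (x + h) - takagi x) / (h * log 2 (1 / \<bar>h\<bar>)) = (S (x + h) - S x) / (h * log 2 (1 / \<bar>h\<bar>))"
    using assms takagi_S[of x] takagi_S[of "x+h"] by simp
qed

lemma takagi_lim:
  assumes "0 \<le> x" "x < 1"
    and "((\<lambda>h. (S (x + h) - S x) / (h * log 2 (1 / \<bar>h\<bar>))) \<longlongrightarrow> c) (at_right 0)"
  shows "((\<lambda>h. (takagi (x + h) - takagi x) / (h * log 2 (1 / \<bar>h\<bar>))) \<longlongrightarrow> c) (at_right 0)"
proof (rule Lim_transform_eventually[OF assms(3)])
  show "\<forall>\<^sub>F h in at_right 0. (S (x + h) - S x) / (h * log 2 (1 / \<bar>h\<bar>))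
                         = (takagi (x + h) - takagi x) / (h * log 2 (1 / \<bar>h\<bar>))"
    using takagi_S_eventually[OF assms(1,2)] by (rule eventually_mono) (erule sym)
qed

lemma onlyif:
  assumes x0: "0 \<le> x" and x1: "x < 1"
    and Dlim: "(\<lambda>n. Dsum x n / real n) \<longlonglongrightarrow> -1"
    and lim: "((\<lambda>h. (takagi (x + h) - takagi x) / (h * log 2 (1 / \<bar>h\<bar>))) \<longlongrightarrow> L) (at_right 0)"
  shows "(\<lambda>n. real (enumerate (zero_digits x) (Suc n)) / real (enumerate (zero_digits x) n)) \<longlonglongrightarrow> 1"
proof (rule ccontr)
  define b where "b = enumerate (zero_digits x)"
  assume "\<not> (\<lambda>n. real (enumerate (zero_digits x) (Suc n)) / real (enumerate (zero_digits x) n)) \<longlonglongrightarrow> 1"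
  then obtain \<rho> where \<rho>: "\<rho> > 0" and fr: "\<forall>no. \<exists>n\<ge>no. \<not> norm (real (b (Suc n)) / real (b n) - 1) < \<rho>"
    unfolding LIMSEQ_iff b_def by blast
  have b1: "b n \<ge> 1" for n unfolding b_def by (rule zd_ge1)
  have bm: "b n < b (Suc n)" for n unfolding b_def using zd_mono[of x] by (simp add: strict_mono_less)
  define Q where "Q = {j. real (b (Suc j)) \<ge> (1+\<rho>) * real (b j)}"
  have Qi: "\<forall>no. \<exists>n\<ge>no. n \<in> Q"
  proof
    fix no
    obtain n where n: "n \<ge> no" "\<not> norm (real (b (Suc n)) / real (b n) - 1) < \<rho>" using fr by blast
    have "real (b (Suc n)) / real (b n) \<ge> 1" using bm[of n] b1[of n] by simp
    hence "real (b (Suc n)) / real (b n) \<ge> 1 + \<rho>" using n(2) by simp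
    hence "n \<in> Q" unfolding Q_def using b1[of n] by (simp add: field_simps)
    thus "\<exists>n\<ge>no. n \<in> Q" using n(1) by blast
  qed
  hence Qinf: "infinite Q" by (simp add: infinite_nat_iff_unbounded_le)
  define \<sigma> where "\<sigma> = enumerate Q"
  have \<sigma>m: "strict_mono \<sigma>" unfolding \<sigma>_def by (rule strict_mono_enumerate[OF Qinf])
  have P: "\<And>n. real (enumerate (zero_digits x) (Suc (\<sigma> n))) \<ge> (1+\<rho>) * real (enumerate (zero_digits x) (\<sigma> n))"
    using enumerate_in_set[OF Qinf] unfolding \<sigma>_def Q_def b_def by simp
  have val: "L = (\<theta> - 1)/(1 + \<theta>)" if \<theta>: "0 < \<theta>" "\<theta> < \<rho>" for \<theta>
  proof -
    obtain hs where hs: "\<forall>n. 0 < hs n" "hs \<longlonglongrightarrow> 0"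
      "(\<lambda>n. (S (x + hs n) - S x) / (hs n * log 2 (1 / \<bar>hs n\<bar>))) \<longlonglongrightarrow> (\<theta> - 1)/(1 + \<theta>)"
      using B_seq[OF Dlim \<sigma>m P \<theta>] by blast
    have "\<forall>n. hs n \<in> {0<..} \<and> hs n \<noteq> 0" using hs(1) by (metis greaterThan_iff less_irrefl)
    hence fl: "filterlim hs (at_right 0) sequentially"
      unfolding filterlim_at using hs(2) by (simp add: always_eventually)
    have "(\<lambda>n. (takagi (x + hs n) - takagi x) / (hs n * log 2 (1 / \<bar>hs n\<bar>))) \<longlonglongrightarrow> L"
      by (rule filterlim_compose[OF lim fl])
    moreover have "\<forall>\<^sub>F n in sequentially. (takagi (x + hs n) - takagi x) / (hs n * log 2 (1 / \<bar>hs n\<bar>))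
         = (S (x + hs n) - S x) / (hs n * log 2 (1 / \<bar>hs n\<bar>))"
      by (rule eventually_compose_filterlim[OF takagi_S_eventually[OF x0 x1] fl])
    ultimately have "(\<lambda>n. (S (x + hs n) - S x) / (hs n * log 2 (1 / \<bar>hs n\<bar>))) \<longlonglongrightarrow> L"
      by (rule Lim_transform_eventually)
    thus ?thesis using hs(3) by (rule LIMSEQ_unique)
  qed
  have "L = (\<rho>/3 - 1)/(1 + \<rho>/3)" using \<rho> by (intro val) auto
  moreover have "L = (2*\<rho>/3 - 1)/(1 + 2*\<rho>/3)" using \<rho> by (intro val) auto
  ultimately have "(\<rho>/3 - 1)/(1 + \<rho>/3) = (2*\<rho>/3 - 1)/(1 + 2*\<rho>/3)" by simp
  hence "(\<rho>/3 - 1)*(1 + 2*\<rho>/3) = (2*\<rho>/3 - 1)*(1 + \<rho>/3)" using \<rho>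
    by (simp add: field_simps)
  hence "\<rho> = 0" by (simp add: algebra_simps)
  thus False using \<rho> by simp
qed

theorem lemma3:
  fixes x d1 :: real
  assumes "0 \<le> x" and "x < 1"
    and d1: "(\<lambda>n. (\<Sum>k=1..n. real (bdigit x k)) / real n) \<longlonglongrightarrow> d1"
  shows "(d1 < 1 \<longrightarrow>
           ((\<lambda>h. (takagi (x + h) - takagi x) / (h * log 2 (1 / \<bar>h\<bar>)))
              \<longlongrightarrow> (1 - d1) - d1) (at_right 0))
       \<and> (d1 = 1 \<longrightarrow>
           ((\<exists>L. ((\<lambda>h. (takagi (x + h) - takagi x) / (h * log 2 (1 / \<bar>h\<bar>)))
                     \<longlongrightarrow> L) (at_right 0))
             \<longleftrightarrow> (\<lambda>n. real (enumerate (zero_digits x) (Suc n)) / real (enumerate (zero_digits x) n))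
                    \<longlonglongrightarrow> 1)
         \<and> ((\<lambda>n. real (enumerate (zero_digits x) (Suc n)) / real (enumerate (zero_digits x) n))
                    \<longlonglongrightarrow> 1
             \<longrightarrow> ((\<lambda>h. (takagi (x + h) - takagi x) / (h * log 2 (1 / \<bar>h\<bar>)))
                   \<longlongrightarrow> -1) (at_right 0)))"
proof (intro conjI impI)
  have DL: "(\<lambda>n. Dsum x n / real n) \<longlonglongrightarrow> 1 - 2 * d1" by (rule Dsum_lim[OF d1])
  {
    assume lt: "d1 < 1"
    have "((\<lambda>h. (S (x + h) - S x) / (h * log 2 (1 / \<bar>h\<bar>))) \<longlongrightarrow> 1 - 2 * d1) (at_right 0)"
      by (rule A_S[OF DL run_i[OF d1 lt]])
    hence tl: "((\<lambda>h. (takagi (x + h) - takagi x) / (h * log 2 (1 / \<bar>h\<bar>))) \<longlongrightarrow> 1 - 2 * d1) (at_right 0)"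
      by (rule takagi_lim[OF assms(1,2)])
    have e: "(1 - d1) - d1 = 1 - 2 * d1" by simp
    show "((\<lambda>h. (takagi (x + h) - takagi x) / (h * log 2 (1 / \<bar>h\<bar>))) \<longlongrightarrow> (1 - d1) - d1) (at_right 0)"
      unfolding e by (rule tl)
  }
  assume eq1: "d1 = 1"
  have "1 - 2 * d1 = -1" using eq1 by simp
  hence DL1: "(\<lambda>n. Dsum x n / real n) \<longlonglongrightarrow> -1" using DL by metis
  show suff: "((\<lambda>n. real (enumerate (zero_digits x) (Suc n)) / real (enumerate (zero_digits x) n)) \<longlonglongrightarrow> 1)
     \<Longrightarrow> ((\<lambda>h. (takagi (x + h) - takagi x) / (h * log 2 (1 / \<bar>h\<bar>))) \<longlongrightarrow> -1) (at_right 0)"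
  proof -
    assume r: "(\<lambda>n. real (enumerate (zero_digits x) (Suc n)) / real (enumerate (zero_digits x) n)) \<longlonglongrightarrow> 1"
    have "((\<lambda>h. (S (x + h) - S x) / (h * log 2 (1 / \<bar>h\<bar>))) \<longlongrightarrow> -1) (at_right 0)"
      by (rule A_S[OF DL1 run_ii[OF r]])
    thus ?thesis by (rule takagi_lim[OF assms(1,2)])
  qed
  show "(\<exists>L. ((\<lambda>h. (takagi (x + h) - takagi x) / (h * log 2 (1 / \<bar>h\<bar>))) \<longlongrightarrow> L) (at_right 0))
     \<longleftrightarrow> (\<lambda>n. real (enumerate (zero_digits x) (Suc n)) / real (enumerate (zero_digits x) n)) \<longlonglongrightarrow> 1"
  proof
    assume "\<exists>L. ((\<lambda>h. (takagi (x + h) - takagi x) / (h * log 2 (1 / \<bar>h\<bar>))) \<longlongrightarrow> L) (at_right 0)"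
    then obtain L where "((\<lambda>h. (takagi (x + h) - takagi x) / (h * log 2 (1 / \<bar>h\<bar>))) \<longlongrightarrow> L) (at_right 0)"
      by blast
    thus "(\<lambda>n. real (enumerate (zero_digits x) (Suc n)) / real (enumerate (zero_digits x) n)) \<longlonglongrightarrow> 1"
      by (rule onlyif[OF assms(1,2) DL1])
  next
    assume "(\<lambda>n. real (enumerate (zero_digits x) (Suc n)) / real (enumerate (zero_digits x) n)) \<longlonglongrightarrow> 1"
    thus "\<exists>L. ((\<lambda>h. (takagi (x + h) - takagi x) / (h * log 2 (1 / \<bar>h\<bar>))) \<longlongrightarrow> L) (at_right 0)"
      using suff by blast
  qed
qed


end
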